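(* Let $G$ be a finitely generated group and let $E$ be a finite right zero semigroup. Then $|\Omega(G\times E)|=|\Omega G|$.
   Context: A right zero semigroup is a semigroup $E$ with $ef=f$ for all $e,f\in E$; $G\times E$ is the direct product semigroup. A digraph on $\Omega$ is a subset $\Gamma\subseteq\Omega\times\Omega$. A path is a sequence of pairwise distinct vertices $(v_0,v_1,\ldots)$ with $(v_i,v_{i+1})\in\Gamma$ (length 0 allowed); a ray is an infinite path; an anti-ray is an infinite sequence of distinct vertices with $(v_{i+1},v_i)\in\Gamma$. For infinite $\Sigma',\Sigma\subseteq\Omega$, $\Sigma'\preccurlyeq\Sigma$ means there are infinitely many pairwise vertex-disjoint paths from vertices of $\Sigma'$ to vertices of $\Sigma$. On rays and anti-rays $\preccurlyeq$ is a preorder with associated equivalence $\approx$; the ends are the $\approx$-classes of rays and anti-rays, and $\Omega\Gamma$ denotes the poset of ends. The right Cayley graph $\Gamma_r(S,A)$ has vertex set $S$ and edges $(x,xa)$, $x\in S$, $a\in A$. For a finitely generated semigroup $S$ (in particular a finitely generated group regarded as a semigroup), $\Omega S:=\Omega\Gamma_r(S,A)$ for any finite semigroup generating set $A$ (well defined up to isomorphism). *)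

theory Defs
  imports "HOL-Algebra.Generated_Groups" "HOL-Library.Equipollence"
begin

definition fin_path :: "('a \<times> 'a) set \<Rightarrow> 'a list \<Rightarrow> bool" where
  "fin_path \<Gamma> p \<longleftrightarrow> p \<noteq> [] \<and> distinct p \<and>
     (\<forall>i. Suc i < length p \<longrightarrow> (p ! i, p ! Suc i) \<in> \<Gamma>)"

definition is_ray :: "('a \<times> 'a) set \<Rightarrow> (nat \<Rightarrow> 'a) \<Rightarrow> bool" where
  "is_ray \<Gamma> r \<longleftrightarrow> inj r \<and> (\<forall>i. (r i, r (Suc i)) \<in> \<Gamma>)"

definition is_antiray :: "('a \<times> 'a) set \<Rightarrow> (nat \<Rightarrow> 'a) \<Rightarrow> bool" where
  "is_antiray \<Gamma> r \<longleftrightarrow> inj r \<and> (\<forall>i. (r (Suc i), r i) \<in> \<Gamma>)"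

definition reach_le :: "('a \<times> 'a) set \<Rightarrow> 'a set \<Rightarrow> 'a set \<Rightarrow> bool" where
  "reach_le \<Gamma> \<Sigma>' \<Sigma> \<longleftrightarrow> (\<exists>P :: 'a list set. infinite P \<and>
     (\<forall>p\<in>P. fin_path \<Gamma> p \<and> hd p \<in> \<Sigma>' \<and> last p \<in> \<Sigma>) \<and>
     (\<forall>p\<in>P. \<forall>q\<in>P. p \<noteq> q \<longrightarrow> set p \<inter> set q = {}))"

definition rays_antirays :: "('a \<times> 'a) set \<Rightarrow> (nat \<Rightarrow> 'a) set" where
  "rays_antirays \<Gamma> = {r. is_ray \<Gamma> r \<or> is_antiray \<Gamma> r}"

definition end_equiv :: "('a \<times> 'a) set \<Rightarrow> ((nat \<Rightarrow> 'a) \<times> (nat \<Rightarrow> 'a)) set" where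
  "end_equiv \<Gamma> = {(r, s). r \<in> rays_antirays \<Gamma> \<and> s \<in> rays_antirays \<Gamma> \<and>
       reach_le \<Gamma> (range r) (range s) \<and> reach_le \<Gamma> (range s) (range r)}"

text \<open>The set of ends (underlying set of the poset \<open>\<Omega>\<Gamma>\<close>).\<close>

definition ends :: "('a \<times> 'a) set \<Rightarrow> (nat \<Rightarrow> 'a) set set" where
  "ends \<Gamma> = rays_antirays \<Gamma> // end_equiv \<Gamma>"

inductive_set sg_gen :: "('a \<Rightarrow> 'a \<Rightarrow> 'a) \<Rightarrow> 'a set \<Rightarrow> 'a set"
  for m :: "'a \<Rightarrow> 'a \<Rightarrow> 'a" and A :: "'a set" where
  base: "a \<in> A \<Longrightarrow> a \<in> sg_gen m A"
| step: "x \<in> sg_gen m A \<Longrightarrow> y \<in> sg_gen m A \<Longrightarrow> m x y \<in> sg_gen m A"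

definition sg_generating_set :: "'a set \<Rightarrow> ('a \<Rightarrow> 'a \<Rightarrow> 'a) \<Rightarrow> 'a set \<Rightarrow> bool" where
  "sg_generating_set S m A \<longleftrightarrow> A \<subseteq> S \<and> sg_gen m A = S"

definition right_cayley :: "'a set \<Rightarrow> ('a \<Rightarrow> 'a \<Rightarrow> 'a) \<Rightarrow> 'a set \<Rightarrow> ('a \<times> 'a) set" where
  "right_cayley S m A = {(x, m x a) | x a. x \<in> S \<and> a \<in> A}"

definition prod_mult :: "('a \<Rightarrow> 'a \<Rightarrow> 'a) \<Rightarrow> ('e \<Rightarrow> 'e \<Rightarrow> 'e) \<Rightarrow> ('a \<times> 'e) \<Rightarrow> ('a \<times> 'e) \<Rightarrow> ('a \<times> 'e)" where
  "prod_mult m1 m2 x y = (m1 (fst x) (fst y), m2 (snd x) (snd y))"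

end

theory Submission
  imports Defs
begin

inductive walkv :: "('a \<times> 'a) set \<Rightarrow> 'a \<Rightarrow> 'a \<Rightarrow> 'a set \<Rightarrow> bool" for \<Gamma> where
  wrefl: "walkv \<Gamma> x x {x}"
| wstep: "(x, y) \<in> \<Gamma> \<Longrightarrow> walkv \<Gamma> y z W \<Longrightarrow> walkv \<Gamma> x z (insert x W)"

lemma walkv_mem: "walkv \<Gamma> x y W \<Longrightarrow> x \<in> W \<and> y \<in> W"
  by (induction rule: walkv.induct) auto

lemma walkv_trans: "walkv \<Gamma> x y W1 \<Longrightarrow> walkv \<Gamma> y z W2 \<Longrightarrow> walkv \<Gamma> x z (W1 \<union> W2)"
proof (induction arbitrary: z W2 rule: walkv.induct)
  case (wrefl x)
  then show ?case using walkv_mem[OF wrefl.prems] by (simp add: insert_absorb)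
next
  case (wstep x y z W)
  then show ?case using walkv.wstep by fastforce
qed

lemma fin_path_Cons:
  "fin_path \<Gamma> (x # p) \<longleftrightarrow> x \<notin> set p \<and> (p = [] \<or> (fin_path \<Gamma> p \<and> (x, hd p) \<in> \<Gamma>))"
proof
  assume a: "fin_path \<Gamma> (x # p)"
  show "x \<notin> set p \<and> (p = [] \<or> (fin_path \<Gamma> p \<and> (x, hd p) \<in> \<Gamma>))"
  proof (cases p)
    case Nil then show ?thesis by simp
  next
    case (Cons y q)
    have 1: "(x, y) \<in> \<Gamma>" using a Cons unfolding fin_path_def by (metis length_Cons nth_Cons_0 nth_Cons_Suc zero_less_Suc less_Suc_eq_0_disj Suc_less_eq)
    have 2: "fin_path \<Gamma> p"
    proof -
      have "\<forall>i. Suc i < length p \<longrightarrow> (p!i, p!Suc i) \<in> \<Gamma>"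
      proof (intro allI impI)
        fix i assume "Suc i < length p"
        then have "Suc (Suc i) < length (x#p)" by simp
        then have "((x#p)!Suc i, (x#p)!Suc (Suc i)) \<in> \<Gamma>" using a unfolding fin_path_def by blast
        then show "(p!i, p!Suc i) \<in> \<Gamma>" by simp
      qed
      then show ?thesis using a Cons unfolding fin_path_def by auto
    qed
    show ?thesis using a 1 2 Cons unfolding fin_path_def by auto
  qed
next
  assume a: "x \<notin> set p \<and> (p = [] \<or> (fin_path \<Gamma> p \<and> (x, hd p) \<in> \<Gamma>))"
  show "fin_path \<Gamma> (x # p)"
  proof (cases p)
    case Nil then show ?thesis unfolding fin_path_def by simp
  next
    case (Cons y q)
    have "\<forall>i. Suc i < length (x # p) \<longrightarrow> ((x # p) ! i, (x # p) ! Suc i) \<in> \<Gamma>"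
    proof (intro allI impI)
      fix i assume "Suc i < length (x # p)"
      then show "((x # p) ! i, (x # p) ! Suc i) \<in> \<Gamma>"
        using a Cons unfolding fin_path_def
        by (cases i) (auto simp: hd_conv_nth)
    qed
    then show ?thesis using a Cons unfolding fin_path_def by auto
  qed
qed

lemma fin_path_walkv: "fin_path \<Gamma> p \<Longrightarrow> walkv \<Gamma> (hd p) (last p) (set p)"
proof (induction p)
  case Nil then show ?case by (simp add: fin_path_def)
next
  case (Cons x p)
  note CP = Cons.prems note CI = Cons.IH
  show ?case
  proof (cases p)
    case Nil then show ?thesis by (simp add: walkv.wrefl)
  next
    case (Cons y q)
    then have "fin_path \<Gamma> p" "(x, hd p) \<in> \<Gamma>" using CP fin_path_Cons[of \<Gamma> x p] \<open>p = y # q\<close> by auto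
    then show ?thesis using CI \<open>p = y # q\<close> walkv.wstep by fastforce
  qed
qed

lemma fin_path_drop: "fin_path \<Gamma> p \<Longrightarrow> i < length p \<Longrightarrow> fin_path \<Gamma> (drop i p)"
  unfolding fin_path_def by (auto simp: distinct_drop)

lemma walkv_fin_path: "walkv \<Gamma> x y W \<Longrightarrow> \<exists>p. fin_path \<Gamma> p \<and> hd p = x \<and> last p = y \<and> set p \<subseteq> W"
proof (induction rule: walkv.induct)
  case (wrefl x)
  then show ?case by (rule exI[of _ "[x]"]) (simp add: fin_path_def)
next
  case (wstep x y z W)
  then obtain p where p: "fin_path \<Gamma> p" "hd p = y" "last p = z" "set p \<subseteq> W" by blast
  have pne: "p \<noteq> []" using p(1) by (simp add: fin_path_def)
  show ?case
  proof (cases "x \<in> set p")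
    case True
    then obtain i where i: "i < length p" "p ! i = x" by (metis in_set_conv_nth)
    let ?q = "drop i p"
    have "fin_path \<Gamma> ?q" using fin_path_drop[OF p(1) i(1)] .
    moreover have "hd ?q = x" using i by (simp add: hd_drop_conv_nth)
    moreover have "last ?q = z" using i p(3) by simp
    moreover have "set ?q \<subseteq> insert x W" using p(4) set_drop_subset by fastforce
    ultimately show ?thesis by blast
  next
    case False
    have "fin_path \<Gamma> (x # p)" using False p pne wstep.hyps(1) fin_path_Cons by metis
    then show ?thesis using p pne by (intro exI[of _ "x # p"]) auto
  qed
qed

definition avoidP :: "('a \<times> 'a) set \<Rightarrow> 'a set \<Rightarrow> 'a set \<Rightarrow> bool" where
  "avoidP \<Gamma> X Y \<longleftrightarrow> (\<forall>F. finite F \<longrightarrow> (\<exists>p. fin_path \<Gamma> p \<and> hd p \<in> X \<and> last p \<in> Y \<and> set p \<inter> F = {}))"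

lemma reach_le_avoidP1:
  assumes "reach_le \<Gamma> X Y" shows "avoidP \<Gamma> X Y"
  unfolding avoidP_def
proof (intro allI impI)
  fix F :: "'a set" assume fF: "finite F"
  obtain P where P: "infinite P" "\<forall>p\<in>P. fin_path \<Gamma> p \<and> hd p \<in> X \<and> last p \<in> Y"
    "\<forall>p\<in>P. \<forall>q\<in>P. p \<noteq> q \<longrightarrow> set p \<inter> set q = {}"
    using assms unfolding reach_le_def by blast
  let ?B = "{p\<in>P. set p \<inter> F \<noteq> {}}"
  define ch where "ch p = (SOME f. f \<in> set p \<inter> F)" for p
  have chm: "ch p \<in> set p \<inter> F" if "p \<in> ?B" for p
  proof -
    have "\<exists>f. f \<in> set p \<inter> F" using that by blast
    then show ?thesis unfolding ch_def by (rule someI_ex)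
  qed
  have "inj_on ch ?B"
  proof (rule inj_onI)
    fix p q assume "p \<in> ?B" "q \<in> ?B" "ch p = ch q"
    then have "ch p \<in> set p \<inter> set q" using chm[OF \<open>p \<in> ?B\<close>] chm[OF \<open>q \<in> ?B\<close>] by auto
    moreover have "p \<in> P" "q \<in> P" using \<open>p \<in> ?B\<close> \<open>q \<in> ?B\<close> by auto
    ultimately show "p = q" using P(3) by blast
  qed
  moreover have "ch ` ?B \<subseteq> F" using chm by blast
  ultimately have "finite ?B" using fF by (rule inj_on_finite)
  then have "infinite (P - ?B)" using P(1) by (rule Diff_infinite_finite)
  then have "P - ?B \<noteq> {}" by (metis finite.emptyI)
  then obtain p where p: "p \<in> P" "set p \<inter> F = {}" by blast
  then show "\<exists>p. fin_path \<Gamma> p \<and> hd p \<in> X \<and> last p \<in> Y \<and> set p \<inter> F = {}" using P(2) by blast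
qed

lemma reach_le_avoidP2:
  assumes "avoidP \<Gamma> X Y" shows "reach_le \<Gamma> X Y"
proof -
  define good where "good F p \<longleftrightarrow> fin_path \<Gamma> p \<and> hd p \<in> X \<and> last p \<in> Y \<and> set p \<inter> F = {}" for F p
  define nxt where "nxt ps = (SOME p. good (\<Union>q\<in>set ps. set q) p)" for ps :: "'a list list"
  have nxt: "good (\<Union>q\<in>set ps. set q) (nxt ps)" for ps
  proof -
    have "finite (\<Union>q\<in>set ps. set q)" by simp
    then have "\<exists>p. good (\<Union>q\<in>set ps. set q) p" using assms unfolding avoidP_def good_def by blast
    then show ?thesis unfolding nxt_def by (rule someI_ex)
  qed
  define ps where "ps = rec_nat [] (\<lambda>n l. nxt l # l)"
  have ps0: "ps 0 = []" and psS: "ps (Suc n) = nxt (ps n) # ps n" for n unfolding ps_def by simp_all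
  have inv: "(\<forall>q\<in>set (ps n). good {} q) \<and> (\<forall>q\<in>set (ps n). \<forall>q'\<in>set (ps n). q \<noteq> q' \<longrightarrow> set q \<inter> set q' = {})
     \<and> length (ps n) = n \<and> distinct (ps n)" for n
  proof (induction n)
    case 0 then show ?case by (simp add: ps0)
  next
    case (Suc n)
    let ?p = "nxt (ps n)"
    have g: "good (\<Union>q\<in>set (ps n). set q) ?p" by (rule nxt)
    then have "?p \<noteq> []" unfolding good_def fin_path_def by simp
    moreover have "set ?p \<inter> (\<Union>q\<in>set (ps n). set q) = {}" using g unfolding good_def by simp
    ultimately have "?p \<notin> set (ps n)" by (metis Int_absorb2 SUP_upper set_empty2)
    then show ?case using Suc g unfolding psS good_def by auto
  qed
  have mono: "set (ps n) \<subseteq> set (ps (n + k))" for n k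
    by (induction k) (auto simp: psS)
  define P where "P = (\<Union>n. set (ps n))"
  have "infinite P"
  proof
    assume fin: "finite P"
    have "set (ps (Suc (card P))) \<subseteq> P" unfolding P_def by blast
    then have "card (set (ps (Suc (card P)))) \<le> card P" using fin card_mono by blast
    moreover have "card (set (ps (Suc (card P)))) = Suc (card P)" using inv distinct_card by metis
    ultimately show False by simp
  qed
  moreover have "\<forall>p\<in>P. fin_path \<Gamma> p \<and> hd p \<in> X \<and> last p \<in> Y"
    using inv unfolding P_def good_def by blast
  moreover have "\<forall>p\<in>P. \<forall>q\<in>P. p \<noteq> q \<longrightarrow> set p \<inter> set q = {}"
  proof (intro ballI impI)
    fix p q assume "p \<in> P" "q \<in> P" "p \<noteq> q"
    then obtain n n' where "p \<in> set (ps n)" "q \<in> set (ps n')" unfolding P_def by blast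
    then have "p \<in> set (ps (max n n'))" "q \<in> set (ps (max n n'))"
      using mono[of n "max n n' - n"] mono[of n' "max n n' - n'"] by auto
    then show "set p \<inter> set q = {}" using inv \<open>p \<noteq> q\<close> by blast
  qed
  ultimately show ?thesis unfolding reach_le_def by blast
qed


lemma reach_le_avoidP: "reach_le \<Gamma> X Y \<longleftrightarrow> avoidP \<Gamma> X Y"
  using reach_le_avoidP1 reach_le_avoidP2 by blast

lemma lazy_walk_ray:
  assumes lw: "\<And>n. w (Suc n) = w n \<or> (w n, w (Suc n)) \<in> \<Gamma>"
    and fv: "\<And>v. finite {n. w n = v}"
  shows "\<exists>\<rho>. is_ray \<Gamma> \<rho> \<and> range \<rho> \<subseteq> range w"
proof -
  define L where "L v = Max {n. w n = v}" for v
  have L1: "w (L (w n)) = w n" and L2: "n \<le> L (w n)" for n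
  proof -
    have "n \<in> {m. w m = w n}" by simp
    then have ne: "{m. w m = w n} \<noteq> {}" by blast
    have "L (w n) \<in> {m. w m = w n}" unfolding L_def using fv ne by (rule Max_in)
    then show "w (L (w n)) = w n" by simp
    show "n \<le> L (w n)" unfolding L_def using fv \<open>n \<in> {m. w m = w n}\<close> by (rule Max_ge)
  qed
  define \<tau> where "\<tau> = rec_nat (L (w 0)) (\<lambda>k t. L (w (Suc t)))"
  have t0: "\<tau> 0 = L (w 0)" and tS: "\<tau> (Suc k) = L (w (Suc (\<tau> k)))" for k unfolding \<tau>_def by simp_all
  define \<rho> where "\<rho> k = w (\<tau> k)" for k
  have tL: "\<tau> k = L (\<rho> k)" for k
  proof (cases k)
    case 0 then show ?thesis using L1[of 0] by (simp add: \<rho>_def t0)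
  next
    case (Suc j) then show ?thesis using L1[of "Suc (\<tau> j)"] by (simp add: \<rho>_def tS)
  qed
  have smono: "strict_mono \<tau>"
    unfolding strict_mono_Suc_iff using L2 tS by (metis Suc_le_lessD)
  have "inj \<rho>"
  proof (rule injI)
    fix j k assume "\<rho> j = \<rho> k"
    then have "\<tau> j = \<tau> k" using tL by simp
    then show "j = k" using smono strict_mono_eq by metis
  qed
  moreover have "(\<rho> k, \<rho> (Suc k)) \<in> \<Gamma>" for k
  proof -
    have r1: "\<rho> (Suc k) = w (Suc (\<tau> k))" unfolding \<rho>_def tS using L1 by simp
    have "w (Suc (\<tau> k)) \<noteq> w (\<tau> k)"
    proof
      assume "w (Suc (\<tau> k)) = w (\<tau> k)"
      then have "Suc (\<tau> k) \<le> L (w (\<tau> k))" using L2 by metis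
      then show False using tL \<rho>_def by (metis Suc_n_not_le_n)
    qed
    then show ?thesis using lw[of "\<tau> k"] r1 \<rho>_def by auto
  qed
  ultimately show ?thesis unfolding is_ray_def \<rho>_def by auto
qed

inductive chn :: "('g, 'b) monoid_scheme \<Rightarrow> 'g set \<Rightarrow> 'g set \<Rightarrow> 'g \<Rightarrow> 'g \<Rightarrow> bool" for G S F where
  crefl: "x \<notin> F \<Longrightarrow> x \<in> carrier G \<Longrightarrow> chn G S F x x"
| cstep: "x \<notin> F \<Longrightarrow> x \<in> carrier G \<Longrightarrow> s \<in> S \<Longrightarrow> chn G S F (x \<otimes>\<^bsub>G\<^esub> s) z \<Longrightarrow> chn G S F x z"

definition Rel :: "('g, 'b) monoid_scheme \<Rightarrow> 'g set \<Rightarrow> 'g set \<Rightarrow> bool" where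
  "Rel G X Y \<longleftrightarrow> (\<exists>S. finite S \<and> S \<subseteq> carrier G \<and> (\<forall>F. finite F \<longrightarrow> (\<exists>x\<in>X. \<exists>y\<in>Y. chn G S F x y)))"

definition coarse :: "('g, 'b) monoid_scheme \<Rightarrow> (nat \<Rightarrow> 'g) \<Rightarrow> bool" where
  "coarse G \<sigma> \<longleftrightarrow> (\<forall>i. \<sigma> i \<in> carrier G) \<and>
     (\<exists>T. finite T \<and> T \<subseteq> carrier G \<and> (\<forall>i. \<exists>t\<in>T. \<sigma> (Suc i) = \<sigma> i \<otimes>\<^bsub>G\<^esub> t)) \<and> (\<forall>g. finite {i. \<sigma> i = g})"

definition ceq :: "('g, 'b) monoid_scheme \<Rightarrow> (nat \<Rightarrow> 'g) \<Rightarrow> (nat \<Rightarrow> 'g) \<Rightarrow> bool" where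
  "ceq G \<sigma> \<tau> \<longleftrightarrow> coarse G \<sigma> \<and> coarse G \<tau> \<and> Rel G (range \<sigma>) (range \<tau>) \<and> Rel G (range \<tau>) (range \<sigma>)"

context group begin

lemma chn_ends: "chn G S F x y \<Longrightarrow> x \<notin> F \<and> y \<notin> F \<and> x \<in> carrier G \<and> y \<in> carrier G"
  by (induction rule: chn.induct) auto

lemma chn_trans: "chn G S F x y \<Longrightarrow> chn G S F y z \<Longrightarrow> chn G S F x z"
  by (induction rule: chn.induct) (auto intro: chn.cstep)

lemma chn_mono: "chn G S F x y \<Longrightarrow> S \<subseteq> S' \<Longrightarrow> F' \<subseteq> F \<Longrightarrow> chn G S' F' x y"
  by (induction rule: chn.induct) (auto intro: chn.intros)

lemma chn_one: "x \<notin> F \<Longrightarrow> y \<notin> F \<Longrightarrow> x \<in> carrier G \<Longrightarrow> y \<in> carrier G \<Longrightarrow> s \<in> S \<Longrightarrow> y = x \<otimes> s \<Longrightarrow> chn G S F x y"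
  by (auto intro: chn.intros)

lemma coarse_inf: "coarse G \<sigma> \<Longrightarrow> infinite (range \<sigma>)"
proof
  assume c: "coarse G \<sigma>" and f: "finite (range \<sigma>)"
  have "UNIV = (\<Union>g\<in>range \<sigma>. {i. \<sigma> i = g})" by auto
  moreover have "finite (\<Union>g\<in>range \<sigma>. {i. \<sigma> i = g})" using c f unfolding coarse_def by blast
  ultimately show False by (metis infinite_UNIV_nat)
qed

lemma coarse_fin_pre: "coarse G \<sigma> \<Longrightarrow> finite F \<Longrightarrow> finite {i. \<sigma> i \<in> F}"
proof -
  assume c: "coarse G \<sigma>" and f: "finite F"
  have "{i. \<sigma> i \<in> F} = (\<Union>g\<in>F. {i. \<sigma> i = g})" by auto
  then show ?thesis using c f unfolding coarse_def by auto
qed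

lemma Rel_inter: "infinite (X \<inter> Y) \<Longrightarrow> X \<inter> Y \<subseteq> carrier G \<Longrightarrow> Rel G X Y"
  unfolding Rel_def
proof (intro exI[of _ "{}"] conjI allI impI)
  fix F :: "'a set" assume "infinite (X \<inter> Y)" "X \<inter> Y \<subseteq> carrier G" "finite F"
  then have "X \<inter> Y - F \<noteq> {}" by (metis Diff_infinite_finite finite.emptyI)
  then obtain x where "x \<in> X" "x \<in> Y" "x \<notin> F" by blast
  then show "\<exists>x\<in>X. \<exists>y\<in>Y. chn G {} F x y" using \<open>X \<inter> Y \<subseteq> carrier G\<close> by (blast intro: chn.crefl)
qed auto

lemma coarse_seg:
  assumes c: "coarse G \<sigma>" and T: "\<forall>i. \<exists>t\<in>T. \<sigma> (Suc i) = \<sigma> i \<otimes> t" "T \<subseteq> carrier G"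
    and N: "\<forall>i\<ge>N. \<sigma> i \<notin> F" and j: "j \<ge> N" and k: "k \<ge> N"
  shows "chn G (T \<union> m_inv G ` T) F (\<sigma> j) (\<sigma> k)"
proof -
  have car: "\<sigma> i \<in> carrier G" for i using c unfolding coarse_def by auto
  have one: "chn G (T \<union> m_inv G ` T) F (\<sigma> i) (\<sigma> (Suc i))" if "i \<ge> N" for i
  proof -
    obtain t where t: "t \<in> T" "\<sigma> (Suc i) = \<sigma> i \<otimes> t" using T by blast
    have a: "\<sigma> (Suc i) \<notin> F" "\<sigma> i \<notin> F" using N that by auto
    show ?thesis using a car[of i] car[of "Suc i"] t by (intro chn_one[where s=t]) auto
  qed
  have bk: "chn G (T \<union> m_inv G ` T) F (\<sigma> (Suc i)) (\<sigma> i)" if "i \<ge> N" for i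
  proof -
    obtain t where t: "t \<in> T" "\<sigma> (Suc i) = \<sigma> i \<otimes> t" using T by blast
    have tc: "t \<in> carrier G" using t T by auto
    have "\<sigma> i = \<sigma> (Suc i) \<otimes> inv t" using t tc car by (simp add: m_assoc)
    moreover have a: "\<sigma> (Suc i) \<notin> F" "\<sigma> i \<notin> F" using N that by auto
    ultimately show ?thesis using car t tc by (intro chn_one[where s="inv t"]) auto
  qed
  show ?thesis
  proof (cases "j \<le> k")
    case True
    then show ?thesis
    proof (induction k rule: dec_induct)
      case base then show ?case using N j car by (auto intro: chn.crefl)
    next
      case (step k) then show ?case using one[of k] j chn_trans by simp
    qed
  next
    case False
    then have "k \<le> j" by simp
    then show ?thesis
    proof (induction j rule: dec_induct)
      case base then show ?case using N k car by (auto intro: chn.crefl)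
    next
      case (step j) then show ?case using bk[of j] k chn_trans by simp
    qed
  qed
qed

lemma Rel_trans:
  assumes c: "coarse G \<sigma>" and r1: "Rel G X (range \<sigma>)" and r2: "Rel G (range \<sigma>) Z"
  shows "Rel G X Z"
proof -
  obtain T where T: "finite T" "T \<subseteq> carrier G" "\<forall>i. \<exists>t\<in>T. \<sigma> (Suc i) = \<sigma> i \<otimes> t"
    using c unfolding coarse_def by blast
  obtain S1 where S1: "finite S1" "S1 \<subseteq> carrier G" "\<forall>F. finite F \<longrightarrow> (\<exists>x\<in>X. \<exists>y\<in>range \<sigma>. chn G S1 F x y)"
    using r1 unfolding Rel_def by blast
  obtain S2 where S2: "finite S2" "S2 \<subseteq> carrier G" "\<forall>F. finite F \<longrightarrow> (\<exists>x\<in>range \<sigma>. \<exists>y\<in>Z. chn G S2 F x y)"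
    using r2 unfolding Rel_def by blast
  let ?S = "S1 \<union> S2 \<union> (T \<union> m_inv G ` T)"
  have "\<exists>x\<in>X. \<exists>z\<in>Z. chn G ?S F x z" if fF: "finite F" for F
  proof -
    have "finite {i. \<sigma> i \<in> F}" using coarse_fin_pre[OF c fF] .
    then obtain N where N0: "\<forall>i\<in>{i. \<sigma> i \<in> F}. i < N" using finite_nat_set_iff_bounded by blast
    have N: "\<forall>i\<ge>N. \<sigma> i \<notin> F"
    proof (intro allI impI)
      fix i assume "N \<le> i"
      then show "\<sigma> i \<notin> F" using N0 by (metis mem_Collect_eq not_le)
    qed
    let ?F' = "F \<union> \<sigma> ` {..<N}"
    have fF': "finite ?F'" using fF by simp
    obtain x y where xy: "x \<in> X" "y \<in> range \<sigma>" "chn G S1 ?F' x y" using S1(3) fF' by meson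
    then obtain j where "y = \<sigma> j" by auto
    with xy have x: "x \<in> X" "chn G S1 ?F' x (\<sigma> j)" by auto
    obtain y' z where yz: "y' \<in> range \<sigma>" "z \<in> Z" "chn G S2 ?F' y' z" using S2(3) fF' by meson
    then obtain k where "y' = \<sigma> k" by auto
    with yz have z: "z \<in> Z" "chn G S2 ?F' (\<sigma> k) z" by auto
    have "\<sigma> j \<notin> ?F'" using chn_ends[OF x(2)] by blast
    then have j: "j \<ge> N"
    proof (rule contrapos_np)
      assume "\<not> N \<le> j"
      then have "\<sigma> j \<in> \<sigma> ` {..<N}" by simp
      then show "\<sigma> j \<in> ?F'" by blast
    qed
    have "\<sigma> k \<notin> ?F'" using chn_ends[OF z(2)] by blast
    then have k: "k \<ge> N"
    proof (rule contrapos_np)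
      assume "\<not> N \<le> k"
      then have "\<sigma> k \<in> \<sigma> ` {..<N}" by simp
      then show "\<sigma> k \<in> ?F'" by blast
    qed
    have a: "chn G ?S F x (\<sigma> j)" using x(2) by (rule chn_mono) auto
    have b: "chn G ?S F (\<sigma> j) (\<sigma> k)" using coarse_seg[OF c T(3) T(2) N j k] by (rule chn_mono) auto
    have d: "chn G ?S F (\<sigma> k) z" using z(2) by (rule chn_mono) auto
    show ?thesis using x(1) z(1) chn_trans[OF a chn_trans[OF b d]] by blast
  qed
  moreover have "finite ?S" "?S \<subseteq> carrier G" using S1 S2 T by auto
  ultimately show ?thesis unfolding Rel_def by (intro exI[of _ ?S]) blast
qed

lemma ceq_sym: "ceq G \<sigma> \<tau> \<Longrightarrow> ceq G \<tau> \<sigma>"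
  unfolding ceq_def by blast

lemma ceq_trans: "ceq G \<sigma> \<tau> \<Longrightarrow> ceq G \<tau> \<rho> \<Longrightarrow> ceq G \<sigma> \<rho>"
  unfolding ceq_def using Rel_trans by blast

lemma ceq_sub: "coarse G \<sigma> \<Longrightarrow> coarse G \<tau> \<Longrightarrow> range \<sigma> \<subseteq> range \<tau> \<Longrightarrow> ceq G \<sigma> \<tau>"
proof -
  assume c: "coarse G \<sigma>" "coarse G \<tau>" and s: "range \<sigma> \<subseteq> range \<tau>"
  have i: "infinite (range \<sigma> \<inter> range \<tau>)" using coarse_inf[OF c(1)] s by (simp add: Int_absorb2)
  have car: "range \<sigma> \<inter> range \<tau> \<subseteq> carrier G" using c(1) unfolding coarse_def by auto
  show ?thesis unfolding ceq_def using c Rel_inter[OF i car] Rel_inter[of "range \<tau>" "range \<sigma>"] i car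
    by (simp add: Int_commute)
qed

end

lemma (in group) lcan: "x \<in> carrier G \<Longrightarrow> y \<in> carrier G \<Longrightarrow> z \<in> carrier G \<Longrightarrow> x \<otimes> y = x \<otimes> z \<longleftrightarrow> y = z"
  by (metis Units_eq Units_l_cancel)

locale cay = group +
  fixes V :: "'v set" and m :: "'v \<Rightarrow> 'v \<Rightarrow> 'v" and Ag :: "'v set" and \<pi> :: "'v \<Rightarrow> 'g"
  assumes closed: "x \<in> V \<Longrightarrow> y \<in> V \<Longrightarrow> m x y \<in> V"
    and assoc: "x \<in> V \<Longrightarrow> y \<in> V \<Longrightarrow> z \<in> V \<Longrightarrow> m (m x y) z = m x (m y z)"
    and finA: "finite Ag"
    and gen: "sg_generating_set V m Ag"
    and hom: "x \<in> V \<Longrightarrow> y \<in> V \<Longrightarrow> \<pi> (m x y) = \<pi> x \<otimes> \<pi> y"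
    and pcar: "x \<in> V \<Longrightarrow> \<pi> x \<in> carrier G"
    and fib: "finite {v \<in> V. \<pi> v = g}"
    and psurj: "g \<in> carrier G \<Longrightarrow> \<exists>v\<in>V. \<pi> v = g"
    and reach: "v \<in> V \<Longrightarrow> w \<in> V \<Longrightarrow> \<exists>c\<in>V. w = m v c"
begin

abbreviation "\<Gamma> \<equiv> right_cayley V m Ag"

lemma AgV: "Ag \<subseteq> V" and genV: "sg_gen m Ag = V"
  using gen unfolding sg_generating_set_def by auto

lemma edge_iff: "(x, y) \<in> \<Gamma> \<longleftrightarrow> x \<in> V \<and> (\<exists>a\<in>Ag. y = m x a)"
  unfolding right_cayley_def by auto

lemma word: "c \<in> V \<Longrightarrow> \<exists>ws. set ws \<subseteq> Ag \<and> (\<forall>v\<in>V. foldl m v ws = m v c)"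
proof -
  assume "c \<in> V"
  then have "c \<in> sg_gen m Ag" using genV by simp
  then show ?thesis
  proof (induction rule: sg_gen.induct)
    case (base a) then show ?case by (intro exI[of _ "[a]"]) simp
  next
    case (step x y)
    then obtain wx wy where wx: "set wx \<subseteq> Ag" "\<forall>v\<in>V. foldl m v wx = m v x"
      and wy: "set wy \<subseteq> Ag" "\<forall>v\<in>V. foldl m v wy = m v y" by blast
    have xV: "x \<in> V" "y \<in> V" using step.hyps genV by auto
    have "\<forall>v\<in>V. foldl m v (wx @ wy) = m v (m x y)"
      using wx wy xV by (simp add: closed assoc)
    then show ?case using wx wy by (intro exI[of _ "wx @ wy"]) simp
  qed
qed

definition gprod :: "'v list \<Rightarrow> 'g" where
  "gprod ws = foldr (\<lambda>x acc. \<pi> x \<otimes> acc) ws \<one>"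

lemma gprod_car: "set ws \<subseteq> V \<Longrightarrow> gprod ws \<in> carrier G"
  unfolding gprod_def by (induction ws) (auto simp: pcar)

lemma pfold: "set ws \<subseteq> V \<Longrightarrow> v \<in> V \<Longrightarrow> foldl m v ws \<in> V \<and> \<pi> (foldl m v ws) = \<pi> v \<otimes> gprod ws"
proof (induction ws arbitrary: v)
  case Nil then show ?case by (simp add: gprod_def pcar)
next
  case (Cons a ws)
  then have "m v a \<in> V" by (simp add: closed)
  then have "foldl m (m v a) ws \<in> V \<and> \<pi> (foldl m (m v a) ws) = \<pi> (m v a) \<otimes> gprod ws" using Cons by simp
  moreover have "gprod (a # ws) = \<pi> a \<otimes> gprod ws" unfolding gprod_def by simp
  moreover have "gprod ws \<in> carrier G" using Cons.prems gprod_car by simp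
  ultimately show ?case using Cons.prems by (simp add: hom pcar m_assoc)
qed

lemma word_walk: "set ws \<subseteq> Ag \<Longrightarrow> v \<in> V \<Longrightarrow>
  \<exists>W. walkv \<Gamma> v (foldl m v ws) W \<and> (\<forall>u\<in>W. \<exists>k. u = foldl m v (take k ws))"
proof (induction ws arbitrary: v)
  case Nil then show ?case by (intro exI[of _ "{v}"]) (auto intro: walkv.wrefl)
next
  case (Cons a ws)
  have aV: "a \<in> V" using Cons.prems AgV by auto
  then have mv: "m v a \<in> V" using Cons.prems closed by auto
  obtain W where W: "walkv \<Gamma> (m v a) (foldl m (m v a) ws) W" "\<forall>u\<in>W. \<exists>k. u = foldl m (m v a) (take k ws)"
    using Cons.IH[OF _ mv] Cons.prems by auto
  have e: "(v, m v a) \<in> \<Gamma>" using Cons.prems edge_iff by auto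
  have "walkv \<Gamma> v (foldl m v (a # ws)) (insert v W)" using walkv.wstep[OF e W(1)] by simp
  moreover have "\<forall>u\<in>insert v W. \<exists>k. u = foldl m v (take k (a # ws))"
  proof
    fix u assume "u \<in> insert v W"
    then show "\<exists>k. u = foldl m v (take k (a # ws))"
    proof
      assume "u = v" then show ?thesis by (intro exI[of _ 0]) simp
    next
      assume "u \<in> W" then obtain k where "u = foldl m (m v a) (take k ws)" using W(2) by blast
      then show ?thesis by (intro exI[of _ "Suc k"]) simp
    qed
  qed
  ultimately show ?case by blast
qed

lemma fibF: "finite F \<Longrightarrow> finite {v \<in> V. \<pi> v \<in> F}"
proof -
  assume "finite F"
  moreover have "{v \<in> V. \<pi> v \<in> F} = (\<Union>g\<in>F. {v \<in> V. \<pi> v = g})" by auto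
  ultimately show ?thesis using fib by auto
qed

lemma walk_chn: "walkv \<Gamma> x y W \<Longrightarrow> x \<in> V \<Longrightarrow> W \<inter> {v \<in> V. \<pi> v \<in> F} = {} \<Longrightarrow> chn G (\<pi> ` Ag) F (\<pi> x) (\<pi> y)"
proof (induction rule: walkv.induct)
  case (wrefl x) then show ?case using pcar by (auto intro: chn.crefl)
next
  case (wstep x y z W)
  then obtain a where a: "a \<in> Ag" "y = m x a" using edge_iff by auto
  have aV: "a \<in> V" using a AgV by auto
  have yV: "y \<in> V" using a wstep.prems closed aV by simp
  have "chn G (\<pi> ` Ag) F (\<pi> y) (\<pi> z)" using wstep yV by auto
  moreover have "\<pi> y = \<pi> x \<otimes> \<pi> a" using a hom wstep.prems aV by simp
  moreover have "\<pi> x \<notin> F" using wstep.prems by auto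
  ultimately show ?case using wstep.prems pcar a by (auto intro: chn.cstep)
qed

end

context cay begin

lemma avoid_Rel:
  assumes XV: "X \<subseteq> V" and a: "avoidP \<Gamma> X Y" shows "Rel G (\<pi> ` X) (\<pi> ` Y)"
proof -
  have "\<exists>x\<in>\<pi> ` X. \<exists>y\<in>\<pi> ` Y. chn G (\<pi> ` Ag) F x y" if fF: "finite F" for F
  proof -
    let ?F1 = "{v \<in> V. \<pi> v \<in> F}"
    have "finite ?F1" using fibF fF by blast
    then obtain p where p: "fin_path \<Gamma> p" "hd p \<in> X" "last p \<in> Y" "set p \<inter> ?F1 = {}"
      using a unfolding avoidP_def by blast
    have "chn G (\<pi> ` Ag) F (\<pi> (hd p)) (\<pi> (last p))"
      using walk_chn[OF fin_path_walkv[OF p(1)]] p XV by blast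
    then show ?thesis using p(2,3) by blast
  qed
  moreover have "finite (\<pi> ` Ag)" "\<pi> ` Ag \<subseteq> carrier G" using finA AgV pcar by auto
  ultimately show ?thesis unfolding Rel_def by (intro exI[of _ "\<pi> ` Ag"]) blast
qed

lemma Rel_avoid:
  assumes XV: "X \<subseteq> V" and YV: "Y \<subseteq> V" and r: "Rel G (\<pi> ` X) (\<pi> ` Y)" shows "avoidP \<Gamma> X Y"
  unfolding avoidP_def
proof (intro allI impI)
  fix F1 :: "'v set" assume fF1: "finite F1"
  obtain S where S: "finite S" "S \<subseteq> carrier G" "\<forall>F. finite F \<longrightarrow> (\<exists>x\<in>\<pi> ` X. \<exists>y\<in>\<pi> ` Y. chn G S F x y)"
    using r unfolding Rel_def by blast
  define C where "C = {c \<in> V. \<pi> c \<in> insert \<one> S}"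
  have fC: "finite C" unfolding C_def using fibF S(1) by blast
  define wd where "wd c = (SOME ws. set ws \<subseteq> Ag \<and> (\<forall>v\<in>V. foldl m v ws = m v c))" for c
  have wd: "set (wd c) \<subseteq> Ag \<and> (\<forall>v\<in>V. foldl m v (wd c) = m v c)" if "c \<in> V" for c
    unfolding wd_def using word[OF that] by (rule someI_ex)
  define Q where "Q = insert \<one> (gprod ` (\<Union>c\<in>C. (\<lambda>k. take k (wd c)) ` {..length (wd c)}))"
  have fQ: "finite Q" unfolding Q_def using fC by auto
  have g: "gprod (take k (wd c)) \<in> carrier G" if "c \<in> C" for c k
  proof -
    have cV: "c \<in> V" using that unfolding C_def by simp
    have "set (take k (wd c)) \<subseteq> set (wd c)" by (rule set_take_subset)
    also have "\<dots> \<subseteq> Ag" using wd[OF cV] by simp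
    also have "\<dots> \<subseteq> V" by (rule AgV)
    finally show ?thesis by (rule gprod_car)
  qed
  have QC: "Q \<subseteq> carrier G"
  proof
    fix q assume "q \<in> Q"
    then show "q \<in> carrier G" unfolding Q_def using g by auto
  qed
  define F' where "F' = (\<lambda>(f, q). \<pi> f \<otimes> inv q) ` ((F1 \<inter> V) \<times> Q)"
  have fF': "finite F'" unfolding F'_def using fF1 fQ by auto
  have mv: "\<exists>W. walkv \<Gamma> v v' W \<and> W \<inter> F1 = {}"
    if x: "x \<notin> F'" and v: "v \<in> V" "\<pi> v = x" and v': "v' \<in> V" "\<pi> v' = x \<otimes> s" and s: "s \<in> insert \<one> S"
    for x v v' s
  proof -
    obtain c where c: "c \<in> V" "v' = m v c" using reach[OF v(1) v'(1)] by blast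
    have sc: "s \<in> carrier G" using s S(2) by auto
    have xc: "x \<in> carrier G" using v pcar by auto
    have "x \<otimes> \<pi> c = x \<otimes> s" using hom[OF v(1) c(1)] c(2) v(2) v'(2) by simp
    then have "\<pi> c = s" using lcan[OF xc pcar[OF c(1)] sc] by simp
    then have cC: "c \<in> C" unfolding C_def using c s by simp
    let ?ws = "wd c"
    obtain W where W: "walkv \<Gamma> v (foldl m v ?ws) W" "\<forall>u\<in>W. \<exists>k. u = foldl m v (take k ?ws)"
      using word_walk[of ?ws v] wd[OF c(1)] v(1) by blast
    have "foldl m v ?ws = v'" using wd[OF c(1)] v(1) c(2) by simp
    moreover have "W \<inter> F1 = {}"
    proof (rule ccontr)
      assume "W \<inter> F1 \<noteq> {}"
      then obtain u k where u: "u \<in> F1" "u = foldl m v (take k ?ws)" using W(2) by blast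
      have "set (take k ?ws) \<subseteq> set ?ws" by (rule set_take_subset)
      also have "\<dots> \<subseteq> Ag" using wd[OF c(1)] by simp
      also have "\<dots> \<subseteq> V" by (rule AgV)
      finally have tV: "set (take k ?ws) \<subseteq> V" .
      have pf: "foldl m v (take k ?ws) \<in> V \<and> \<pi> (foldl m v (take k ?ws)) = \<pi> v \<otimes> gprod (take k ?ws)"
        by (rule pfold[OF tV v(1)])
      have pu: "u \<in> V" "\<pi> u = x \<otimes> gprod (take k ?ws)" using pf unfolding u(2)[symmetric] v(2) by auto
      have "take k ?ws \<in> (\<lambda>k. take k ?ws) ` {..length ?ws}"
        by (rule image_eqI[where x="min k (length ?ws)"]) (auto simp: min_def)
      then have "take k ?ws \<in> (\<Union>c\<in>C. (\<lambda>k. take k (wd c)) ` {..length (wd c)})" using cC by blast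
      then have qQ: "gprod (take k ?ws) \<in> Q" unfolding Q_def by blast
      then have qc: "gprod (take k ?ws) \<in> carrier G" using QC by auto
      have "\<pi> u \<otimes> inv (gprod (take k ?ws)) = x" using pu(2) xc qc by (simp add: m_assoc)
      moreover have "\<pi> u \<otimes> inv (gprod (take k ?ws)) \<in> F'" unfolding F'_def
        by (rule image_eqI[where x="(u, gprod (take k ?ws))"]) (use u(1) pu(1) qQ in auto)
      ultimately show False using x by simp
    qed
    ultimately show ?thesis using W(1) by blast
  qed
  have main: "chn G S F' x y \<Longrightarrow> \<forall>v\<in>V. \<pi> v = x \<longrightarrow> (\<forall>w\<in>V. \<pi> w = y \<longrightarrow> (\<exists>W. walkv \<Gamma> v w W \<and> W \<inter> F1 = {}))" for x y
  proof (induction rule: chn.induct)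
    case (crefl x)
    show ?case
    proof (intro ballI impI)
      fix v w assume "v \<in> V" "\<pi> v = x" "w \<in> V" "\<pi> w = x"
      then show "\<exists>W. walkv \<Gamma> v w W \<and> W \<inter> F1 = {}" using mv[of x v w \<one>] crefl by simp
    qed
  next
    case (cstep x s z)
    show ?case
    proof (intro ballI impI)
      fix v w assume vw: "v \<in> V" "\<pi> v = x" "w \<in> V" "\<pi> w = z"
      have "x \<otimes> s \<in> carrier G" using cstep S(2) by auto
      then obtain v' where v': "v' \<in> V" "\<pi> v' = x \<otimes> s" using psurj by blast
      obtain W1 where W1: "walkv \<Gamma> v v' W1" "W1 \<inter> F1 = {}" using mv[of x v v' s] cstep vw v' by auto
      obtain W2 where W2: "walkv \<Gamma> v' w W2" "W2 \<inter> F1 = {}" using cstep.IH v' vw by blast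
      show "\<exists>W. walkv \<Gamma> v w W \<and> W \<inter> F1 = {}" using walkv_trans[OF W1(1) W2(1)] W1(2) W2(2) by blast
    qed
  qed
  obtain x y where xy: "x \<in> \<pi> ` X" "y \<in> \<pi> ` Y" "chn G S F' x y" using S(3) fF' by blast
  obtain v0 where v0: "v0 \<in> X" "\<pi> v0 = x" using xy by blast
  obtain y0 where y0: "y0 \<in> Y" "\<pi> y0 = y" using xy by blast
  obtain W where W: "walkv \<Gamma> v0 y0 W" "W \<inter> F1 = {}" using main[OF xy(3)] v0 y0 XV YV by blast
  obtain p where "fin_path \<Gamma> p" "hd p = v0" "last p = y0" "set p \<subseteq> W" using walkv_fin_path[OF W(1)] by blast
  then show "\<exists>p. fin_path \<Gamma> p \<and> hd p \<in> X \<and> last p \<in> Y \<and> set p \<inter> F1 = {}" using v0 y0 W(2) by blast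
qed

lemma reach_Rel: "X \<subseteq> V \<Longrightarrow> Y \<subseteq> V \<Longrightarrow> reach_le \<Gamma> X Y \<longleftrightarrow> Rel G (\<pi> ` X) (\<pi> ` Y)"
  using reach_le_avoidP avoid_Rel Rel_avoid by blast

end

context cay begin

lemma RA_props:
  assumes r: "r \<in> rays_antirays \<Gamma>"
  shows "range r \<subseteq> V" "inj r" "coarse G (\<pi> \<circ> r)"
proof -
  have ra: "is_ray \<Gamma> r \<or> is_antiray \<Gamma> r" using r unfolding rays_antirays_def by simp
  then have ir: "inj r" unfolding is_ray_def is_antiray_def by auto
  have rV: "r i \<in> V" for i
  proof (cases "is_ray \<Gamma> r")
    case True then have "(r i, r (Suc i)) \<in> \<Gamma>" unfolding is_ray_def by blast
    then show ?thesis using edge_iff by blast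
  next
    case False then have "(r (Suc i), r i) \<in> \<Gamma>" using ra unfolding is_antiray_def by blast
    then obtain a where "r (Suc i) \<in> V" "a \<in> Ag" "r i = m (r (Suc i)) a" using edge_iff by blast
    then show ?thesis using closed[of "r (Suc i)" a] AgV by auto
  qed
  show "range r \<subseteq> V" using rV by blast
  show "inj r" by (rule ir)
  let ?T = "\<pi> ` Ag \<union> m_inv G ` \<pi> ` Ag"
  have Tc: "?T \<subseteq> carrier G" using AgV pcar by auto
  have fT: "finite ?T" using finA by simp
  have st: "\<exists>t\<in>?T. \<pi> (r (Suc i)) = \<pi> (r i) \<otimes> t" for i
  proof (cases "is_ray \<Gamma> r")
    case True then have "(r i, r (Suc i)) \<in> \<Gamma>" unfolding is_ray_def by blast
    then obtain a where a: "a \<in> Ag" "r (Suc i) = m (r i) a" using edge_iff by blast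
    then have "\<pi> (r (Suc i)) = \<pi> (r i) \<otimes> \<pi> a" using hom[OF rV[of i] subsetD[OF AgV a(1)]] by simp
    then show ?thesis using a(1) by blast
  next
    case False then have "(r (Suc i), r i) \<in> \<Gamma>" using ra unfolding is_antiray_def by blast
    then obtain a where a: "a \<in> Ag" "r i = m (r (Suc i)) a" using edge_iff by blast
    then have e: "\<pi> (r i) = \<pi> (r (Suc i)) \<otimes> \<pi> a" using hom[OF rV[of "Suc i"] subsetD[OF AgV a(1)]] by simp
    have c1: "\<pi> (r i) \<in> carrier G" "\<pi> (r (Suc i)) \<in> carrier G" "\<pi> a \<in> carrier G"
      using rV pcar a(1) AgV by auto
    have "\<pi> (r (Suc i)) = \<pi> (r i) \<otimes> inv (\<pi> a)" using e c1 by (simp add: m_assoc)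
    then show ?thesis using a(1) by blast
  qed
  have fibr: "finite {i. (\<pi> \<circ> r) i = g}" for g
  proof -
    have "{i. (\<pi> \<circ> r) i = g} = r -` {v \<in> V. \<pi> v = g}" using rV by auto
    then show ?thesis using finite_vimageI[OF fib ir] by simp
  qed
  show "coarse G (\<pi> \<circ> r)" unfolding coarse_def
    using rV pcar st fT Tc fibr by (intro conjI allI exI[of _ ?T]) auto
qed

lemma end_equiv_iff:
  "(r, s) \<in> end_equiv \<Gamma> \<longleftrightarrow> r \<in> rays_antirays \<Gamma> \<and> s \<in> rays_antirays \<Gamma> \<and> ceq G (\<pi> \<circ> r) (\<pi> \<circ> s)"
proof -
  have h: "reach_le \<Gamma> (range r) (range s) \<longleftrightarrow> Rel G (range (\<pi> \<circ> r)) (range (\<pi> \<circ> s))"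
    if "r \<in> rays_antirays \<Gamma>" "s \<in> rays_antirays \<Gamma>" for r s
    using reach_Rel[OF RA_props(1)[OF that(1)] RA_props(1)[OF that(2)]] by (simp add: image_comp)
  show ?thesis
  proof (cases "r \<in> rays_antirays \<Gamma> \<and> s \<in> rays_antirays \<Gamma>")
    case True
    then show ?thesis unfolding end_equiv_def ceq_def
      using h[of r s] h[of s r] RA_props(3)[of r] RA_props(3)[of s] by simp
  next
    case False
    then show ?thesis unfolding end_equiv_def by auto
  qed
qed

end

context cay begin

lemma W:
  assumes c: "coarse G \<sigma>"
  shows "\<exists>\<rho>. is_ray \<Gamma> \<rho> \<and> ceq G (\<pi> \<circ> \<rho>) \<sigma>"
proof -
  obtain T where T: "finite T" "T \<subseteq> carrier G" "\<forall>i. \<exists>t\<in>T. \<sigma> (Suc i) = \<sigma> i \<otimes> t"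
    using c unfolding coarse_def by blast
  have sc: "\<sigma> i \<in> carrier G" for i using c unfolding coarse_def by blast
  define t where "t i = inv (\<sigma> i) \<otimes> \<sigma> (Suc i)" for i
  have tT: "t i \<in> T" and tS: "\<sigma> (Suc i) = \<sigma> i \<otimes> t i" for i
  proof -
    obtain t' where t': "t' \<in> T" "\<sigma> (Suc i) = \<sigma> i \<otimes> t'" using T(3) by blast
    have t'c: "t' \<in> carrier G" using t'(1) T(2) by auto
    have "t i = t'" unfolding t_def using t'(2) t'c sc[of i] by (simp add: m_assoc[symmetric])
    then show "t i \<in> T" "\<sigma> (Suc i) = \<sigma> i \<otimes> t i" using t' by auto
  qed
  have tc: "t i \<in> carrier G" for i using tT T(2) by auto
  define cc where "cc s = (SOME c. c \<in> V \<and> \<pi> c = s)" for s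
  have cc: "cc s \<in> V \<and> \<pi> (cc s) = s" if "s \<in> carrier G" for s
    unfolding cc_def using psurj[OF that] by (metis (mono_tags, lifting) someI_ex)
  define wd where "wd s = (SOME ws. set ws \<subseteq> Ag \<and> (\<forall>v\<in>V. foldl m v ws = m v (cc s)))" for s
  have wd: "set (wd s) \<subseteq> Ag \<and> (\<forall>v\<in>V. foldl m v (wd s) = m v (cc s))" if "s \<in> carrier G" for s
    unfolding wd_def using word[OF conjunct1[OF cc[OF that]]] by (rule someI_ex)
  define M where "M = Suc (Max ((\<lambda>s. length (wd s)) ` T))"
  have hML: "length (wd s) < M" if "s \<in> T" for s
  proof -
    have "length (wd s) \<le> Max ((\<lambda>s. length (wd s)) ` T)" using T(1) that by simp
    then show ?thesis unfolding M_def by simp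
  qed
  have M0: "0 < M" unfolding M_def by simp
  obtain v0 where v0: "v0 \<in> V" "\<pi> v0 = \<sigma> 0" using psurj[OF sc[of 0]] by blast
  define b where "b = rec_nat v0 (\<lambda>i x. m x (cc (t i)))"
  have b0: "b 0 = v0" and bS: "b (Suc i) = m (b i) (cc (t i))" for i unfolding b_def by simp_all
  have bV: "b i \<in> V \<and> \<pi> (b i) = \<sigma> i" for i
  proof (induction i)
    case 0 then show ?case using v0 b0 by simp
  next
    case (Suc i)
    have ccV: "cc (t i) \<in> V" "\<pi> (cc (t i)) = t i" using cc[OF tc[of i]] by auto
    have "b (Suc i) \<in> V" unfolding bS using closed Suc ccV by simp
    moreover have "\<pi> (b (Suc i)) = \<sigma> (Suc i)" unfolding bS tS using hom[of "b i" "cc (t i)"] Suc ccV by simp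
    ultimately show ?case by simp
  qed
  define w where "w n = foldl m (b (n div M)) (take (n mod M) (wd (t (n div M))))" for n
  have wsV: "set (take k (wd (t i))) \<subseteq> V" for k i
  proof -
    have "set (take k (wd (t i))) \<subseteq> set (wd (t i))" by (rule set_take_subset)
    also have "\<dots> \<subseteq> Ag" using wd[OF tc[of i]] by simp
    also have "\<dots> \<subseteq> V" by (rule AgV)
    finally show ?thesis .
  qed
  have pw: "w n \<in> V \<and> \<pi> (w n) = \<sigma> (n div M) \<otimes> gprod (take (n mod M) (wd (t (n div M))))" for n
    using pfold[OF wsV conjunct1[OF bV]] bV unfolding w_def by simp
  have wb: "w (i * M) = b i" for i unfolding w_def using M0 by simp
  have lazy: "w (Suc n) = w n \<or> (w n, w (Suc n)) \<in> \<Gamma>" for n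
  proof -
    define i where "i = n div M"
    define k where "k = n mod M"
    have n: "n = i * M + k" unfolding i_def k_def by simp
    have kM: "k < M" unfolding k_def using M0 by simp
    let ?ws = "wd (t i)"
    have Lw: "length ?ws < M" using hML[OF tT[of i]] .
    have wn: "w n = foldl m (b i) (take k ?ws)" unfolding w_def i_def k_def by simp
    show ?thesis
    proof (cases "Suc k < M")
      case True
      have e: "Suc n = Suc k + i * M" using n by simp
      have d1: "(Suc k + i * M) div M = i + Suc k div M" by (rule div_mult_self1) (use M0 in simp)
      have d2: "(Suc k + i * M) mod M = Suc k mod M" by (rule mod_mult_self1)
      have "Suc n div M = i" "Suc n mod M = Suc k" unfolding e d1 d2 using True by simp_all
      then have ws: "w (Suc n) = foldl m (b i) (take (Suc k) ?ws)" unfolding w_def by simp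
      show ?thesis
      proof (cases "k < length ?ws")
        case True
        have "take (Suc k) ?ws = take k ?ws @ [?ws ! k]" using True by (simp add: take_Suc_conv_app_nth)
        then have e: "w (Suc n) = m (w n) (?ws ! k)" using ws wn by simp
        have "?ws ! k \<in> Ag" using True wd[OF tc[of i]] nth_mem by blast
        moreover have "w n \<in> V" using pw by simp
        ultimately have "(w n, w (Suc n)) \<in> \<Gamma>" using e edge_iff by blast
        then show ?thesis by simp
      next
        case False
        then show ?thesis using ws wn by simp
      qed
    next
      case False
      then have kk: "Suc k = M" using kM by simp
      then have "Suc n = Suc i * M" using n by simp
      then have "Suc n div M = Suc i" "Suc n mod M = 0" using M0 by simp_all
      then have "w (Suc n) = b (Suc i)" unfolding w_def by simp
      also have "\<dots> = m (b i) (cc (t i))" by (rule bS)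
      also have "\<dots> = foldl m (b i) ?ws" using wd[OF tc[of i]] bV by simp
      also have "\<dots> = foldl m (b i) (take k ?ws)" using Lw kk by simp
      finally show ?thesis using wn by simp
    qed
  qed
  define Q where "Q = gprod ` (\<Union>s\<in>T. (\<lambda>k. take k (wd s)) ` {..length (wd s)})"
  have fQ: "finite Q" unfolding Q_def using T(1) by simp
  have gQ: "gprod (take (n mod M) (wd (t (n div M)))) \<in> Q" for n
  proof -
    let ?ws = "wd (t (n div M))"
    have "take (n mod M) ?ws \<in> (\<lambda>k. take k ?ws) ` {..length ?ws}"
      by (rule image_eqI[where x="min (n mod M) (length ?ws)"]) (auto simp: min_def)
    then have "take (n mod M) ?ws \<in> (\<Union>s\<in>T. (\<lambda>k. take k (wd s)) ` {..length (wd s)})"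
      using tT[of "n div M"] by blast
    then show ?thesis unfolding Q_def by (rule imageI)
  qed
  have gc: "gprod (take (n mod M) (wd (t (n div M)))) \<in> carrier G" for n
    using gprod_car[OF wsV] .
  have fibw: "finite {n. \<pi> (w n) = g}" for g
  proof -
    define Fg where "Fg = (\<lambda>q. g \<otimes> inv q) ` Q"
    have "finite Fg" unfolding Fg_def using fQ by simp
    then have fI: "finite {i. \<sigma> i \<in> Fg}" using coarse_fin_pre[OF c] by blast
    then obtain B where B: "\<forall>i\<in>{i. \<sigma> i \<in> Fg}. i < B" using finite_nat_set_iff_bounded by blast
    have "n < B * M" if "\<pi> (w n) = g" for n
    proof -
      let ?q = "gprod (take (n mod M) (wd (t (n div M))))"
      have "g = \<sigma> (n div M) \<otimes> ?q" using pw[of n] that by simp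
      then have "\<sigma> (n div M) = g \<otimes> inv ?q" using sc gc by (simp add: m_assoc)
      then have "\<sigma> (n div M) \<in> Fg" unfolding Fg_def using gQ[of n] by blast
      then have "n div M < B" using B by blast
      then show "n < B * M" using M0 by (metis div_less_iff_less_mult)
    qed
    then have "{n. \<pi> (w n) = g} \<subseteq> {..<B * M}" by blast
    then show ?thesis using finite_subset by blast
  qed
  have fv: "finite {n. w n = v}" for v
  proof -
    have "{n. w n = v} \<subseteq> {n. \<pi> (w n) = \<pi> v}" by auto
    then show ?thesis using fibw finite_subset by blast
  qed
  obtain \<rho> where \<rho>: "is_ray \<Gamma> \<rho>" "range \<rho> \<subseteq> range w" using lazy_walk_ray[of w \<Gamma>, OF lazy fv] by blast
  have cw: "coarse G (\<pi> \<circ> w)"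
  proof -
    let ?T = "insert \<one> (\<pi> ` Ag)"
    have "\<exists>t\<in>?T. (\<pi> \<circ> w) (Suc n) = (\<pi> \<circ> w) n \<otimes> t" for n
    proof (cases "w (Suc n) = w n")
      case True
      have "\<pi> (w n) \<in> carrier G" using pcar pw[of n] by blast
      then show ?thesis using True by (intro bexI[of _ \<one>]) auto
    next
      case False
      then have "(w n, w (Suc n)) \<in> \<Gamma>" using lazy by metis
      then obtain a where a: "a \<in> Ag" "w (Suc n) = m (w n) a" using edge_iff by blast
      then have "\<pi> (w (Suc n)) = \<pi> (w n) \<otimes> \<pi> a" using hom[OF conjunct1[OF pw[of n]] subsetD[OF AgV a(1)]] by simp
      then show ?thesis using a(1) by auto
    qed
    moreover have "finite ?T" "?T \<subseteq> carrier G" using finA AgV pcar by auto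
    moreover have "(\<pi> \<circ> w) n \<in> carrier G" for n using pcar conjunct1[OF pw[of n]] by simp
    moreover have "finite {n. (\<pi> \<circ> w) n = g}" for g using fibw by simp
    ultimately show ?thesis unfolding coarse_def by (intro conjI allI exI[of _ ?T]) auto
  qed
  have cr: "coarse G (\<pi> \<circ> \<rho>)" using RA_props(3) \<rho>(1) unfolding rays_antirays_def by blast
  have e1: "ceq G \<sigma> (\<pi> \<circ> w)"
  proof (rule ceq_sub[OF c cw])
    show "range \<sigma> \<subseteq> range (\<pi> \<circ> w)"
    proof
      fix x assume "x \<in> range \<sigma>"
      then obtain i where "x = \<sigma> i" by blast
      then have "x = (\<pi> \<circ> w) (i * M)" using wb bV by simp
      then show "x \<in> range (\<pi> \<circ> w)" by blast
    qed
  qed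
  have e2: "ceq G (\<pi> \<circ> \<rho>) (\<pi> \<circ> w)"
    by (rule ceq_sub[OF cr cw]) (use \<rho>(2) in auto)
  have "ceq G (\<pi> \<circ> \<rho>) \<sigma>" using ceq_trans[OF e2 ceq_sym[OF e1]] .
  then show ?thesis using \<rho>(1) by blast
qed

end

lemma quot_eqpoll:
  fixes f :: "'a \<Rightarrow> 'c" and g :: "'b \<Rightarrow> 'c" and R :: "'c \<Rightarrow> 'c \<Rightarrow> bool"
  assumes RA: "\<And>a a'. (a, a') \<in> EA \<longleftrightarrow> a \<in> A \<and> a' \<in> A \<and> R (f a) (f a')"
    and RB: "\<And>b b'. (b, b') \<in> EB \<longleftrightarrow> b \<in> B \<and> b' \<in> B \<and> R (g b) (g b')"
    and sym: "\<And>x y. R x y \<Longrightarrow> R y x" and trans: "\<And>x y z. R x y \<Longrightarrow> R y z \<Longrightarrow> R x z"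
    and AB: "\<And>a. a \<in> A \<Longrightarrow> \<exists>b\<in>B. R (f a) (g b)"
    and BA: "\<And>b. b \<in> B \<Longrightarrow> \<exists>a\<in>A. R (f a) (g b)"
  shows "A // EA \<approx> B // EB"
proof -
  define h where "h c = {b \<in> B. \<exists>a\<in>c. R (f a) (g b)}" for c
  have clA: "EA `` {a} = {a'. a \<in> A \<and> a' \<in> A \<and> R (f a) (f a')}" for a using RA by auto
  have clB: "EB `` {b} = {b'. b \<in> B \<and> b' \<in> B \<and> R (g b) (g b')}" for b using RB by auto
  have key: "h (EA `` {a}) = EB `` {b0}" if a: "a \<in> A" and b0: "b0 \<in> B" "R (f a) (g b0)" for a b0
  proof (rule Set.set_eqI)
    fix b
    have refl: "R (f a) (f a)" using trans[OF b0(2) sym[OF b0(2)]] .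
    show "b \<in> h (EA `` {a}) \<longleftrightarrow> b \<in> EB `` {b0}"
    proof
      assume "b \<in> h (EA `` {a})"
      then obtain a' where "b \<in> B" "a' \<in> A" "R (f a) (f a')" "R (f a') (g b)" unfolding h_def clA by blast
      then have "R (f a) (g b)" using trans by blast
      then have "R (g b0) (g b)" using trans sym b0(2) by blast
      then show "b \<in> EB `` {b0}" unfolding clB using \<open>b \<in> B\<close> b0(1) by blast
    next
      assume "b \<in> EB `` {b0}"
      then have "b \<in> B" "R (g b0) (g b)" unfolding clB by auto
      then have "R (f a) (g b)" using trans b0(2) by blast
      then show "b \<in> h (EA `` {a})" unfolding h_def clA using a refl \<open>b \<in> B\<close> by blast
    qed
  qed
  have "bij_betw h (A // EA) (B // EB)"
    unfolding bij_betw_def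
  proof
    show "inj_on h (A // EA)"
    proof (rule inj_onI)
      fix c1 c2 assume c1: "c1 \<in> A // EA" and c2: "c2 \<in> A // EA" and eq: "h c1 = h c2"
      obtain a1 where a1: "a1 \<in> A" "c1 = EA `` {a1}" using c1 by (auto elim: quotientE)
      obtain a2 where a2: "a2 \<in> A" "c2 = EA `` {a2}" using c2 by (auto elim: quotientE)
      obtain b1 where b1: "b1 \<in> B" "R (f a1) (g b1)" using AB a1(1) by blast
      obtain b2 where b2: "b2 \<in> B" "R (f a2) (g b2)" using AB a2(1) by blast
      have "EB `` {b1} = EB `` {b2}" using eq key[OF a1(1) b1] key[OF a2(1) b2] a1(2) a2(2) by simp
      moreover have "b2 \<in> EB `` {b2}" unfolding clB using b2 trans[OF sym[OF b2(2)] b2(2)] by blast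
      ultimately have "R (g b1) (g b2)" unfolding clB by blast
      then have r12: "R (f a1) (f a2)" using trans[OF b1(2) trans[OF _ sym[OF b2(2)]]] by blast
      show "c1 = c2" unfolding a1(2) a2(2) clA
        using a1(1) a2(1) r12 trans sym by blast
    qed
    show "h ` (A // EA) = B // EB"
    proof
      show "h ` (A // EA) \<subseteq> B // EB"
      proof
        fix y assume "y \<in> h ` (A // EA)"
        then obtain a where a: "a \<in> A" "y = h (EA `` {a})" by (auto elim: quotientE)
        obtain b where b: "b \<in> B" "R (f a) (g b)" using AB a(1) by blast
        have "y = EB `` {b}" using key[OF a(1) b] a(2) by simp
        then show "y \<in> B // EB" using b(1) by (simp add: quotientI)
      qed
    next
      show "B // EB \<subseteq> h ` (A // EA)"
      proof
        fix y assume "y \<in> B // EB"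
        then obtain b where b: "b \<in> B" "y = EB `` {b}" by (auto elim: quotientE)
        obtain a where a: "a \<in> A" "R (f a) (g b)" using BA b(1) by blast
        have "y = h (EA `` {a})" using key[OF a(1) b(1) a(2)] b(2) by simp
        then show "y \<in> h ` (A // EA)" using a(1) by (simp add: quotientI)
      qed
    qed
  qed
  then show ?thesis unfolding eqpoll_def by blast
qed

theorem mainTheorem10:
  fixes G :: "('g, 'b) monoid_scheme"
    and E :: "'e set" and multE :: "'e \<Rightarrow> 'e \<Rightarrow> 'e"
  assumes "group G"
    and "\<exists>A. finite A \<and> A \<subseteq> carrier G \<and> generate G A = carrier G"
    and "finite E" and "E \<noteq> {}"
    and "\<forall>e\<in>E. \<forall>f\<in>E. multE e f = f"
    and "finite A" and "sg_generating_set (carrier G) (mult G) A"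
    and "finite B" and "sg_generating_set (carrier G \<times> E) (prod_mult (mult G) multE) B"
  shows "ends (right_cayley (carrier G \<times> E) (prod_mult (mult G) multE) B)
           \<approx> ends (right_cayley (carrier G) (mult G) A)"
proof -
  note grp = assms(1)
  interpret gg: group G by (rule grp)
  note rz = assms(5)
  interpret I0: cay G "carrier G" "mult G" A "\<lambda>x. x"
  proof (unfold_locales)
    fix x y z assume "x \<in> carrier G" "y \<in> carrier G" "z \<in> carrier G"
    then show "x \<otimes>\<^bsub>G\<^esub> y \<otimes>\<^bsub>G\<^esub> z = x \<otimes>\<^bsub>G\<^esub> (y \<otimes>\<^bsub>G\<^esub> z)" using group.is_monoid[OF grp] by (simp add: monoid.m_assoc)
  next
    fix x y assume "x \<in> carrier G" "y \<in> carrier G"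
    then show "x \<otimes>\<^bsub>G\<^esub> y \<in> carrier G" using group.is_monoid[OF grp] by (simp add: monoid.m_closed)
  next
    fix g show "finite {v \<in> carrier G. v = g}" by (rule finite_subset[of _ "{g}"]) auto
  next
    fix v w assume vw: "v \<in> carrier G" "w \<in> carrier G"
    show "\<exists>c\<in>carrier G. w = v \<otimes>\<^bsub>G\<^esub> c"
      using vw by (intro bexI[of _ "inv\<^bsub>G\<^esub> v \<otimes>\<^bsub>G\<^esub> w"]) (auto simp: gg.m_assoc[symmetric])
  qed (use assms in auto)
  interpret I1: cay G "carrier G \<times> E" "prod_mult (mult G) multE" B fst
  proof (unfold_locales)
    fix x y assume "x \<in> carrier G \<times> E" "y \<in> carrier G \<times> E"
    then show "prod_mult (mult G) multE x y \<in> carrier G \<times> E"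
      using rz group.is_monoid[OF grp] by (auto simp: prod_mult_def monoid.m_closed)
  next
    fix x y z assume "x \<in> carrier G \<times> E" "y \<in> carrier G \<times> E" "z \<in> carrier G \<times> E"
    then show "prod_mult (mult G) multE (prod_mult (mult G) multE x y) z = prod_mult (mult G) multE x (prod_mult (mult G) multE y z)"
      using rz group.is_monoid[OF grp] by (auto simp: prod_mult_def monoid.m_assoc)
  next
    fix x y assume "x \<in> carrier G \<times> E" "y \<in> carrier G \<times> E"
    then show "fst (prod_mult (mult G) multE x y) = fst x \<otimes>\<^bsub>G\<^esub> fst y" by (simp add: prod_mult_def)
  next
    fix g show "finite {v \<in> carrier G \<times> E. fst v = g}"
      by (rule finite_subset[of _ "{g} \<times> E"]) (use assms(3) in auto)
  next
    fix g assume "g \<in> carrier G"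
    then show "\<exists>v\<in>carrier G \<times> E. fst v = g" using assms(4) by auto
  next
    fix v w assume vw: "v \<in> carrier G \<times> E" "w \<in> carrier G \<times> E"
    have "prod_mult (mult G) multE v (inv\<^bsub>G\<^esub> fst v \<otimes>\<^bsub>G\<^esub> fst w, snd w) = w"
      using vw rz by (auto simp: prod_mult_def gg.m_assoc[symmetric])
    moreover have "(inv\<^bsub>G\<^esub> fst v \<otimes>\<^bsub>G\<^esub> fst w, snd w) \<in> carrier G \<times> E" using vw grp by auto
    ultimately show "\<exists>c\<in>carrier G \<times> E. w = prod_mult (mult G) multE v c" by metis
  qed (use assms in auto)
  show ?thesis unfolding ends_def
  proof (rule quot_eqpoll[where f = "\<lambda>r. fst \<circ> r" and g = "\<lambda>t. (\<lambda>x. x) \<circ> t" and R = "ceq G"])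
    show "(a, a') \<in> end_equiv I1.\<Gamma> \<longleftrightarrow> a \<in> rays_antirays I1.\<Gamma> \<and> a' \<in> rays_antirays I1.\<Gamma> \<and> ceq G (fst \<circ> a) (fst \<circ> a')" for a a'
      by (rule I1.end_equiv_iff)
    show "(b, b') \<in> end_equiv I0.\<Gamma> \<longleftrightarrow> b \<in> rays_antirays I0.\<Gamma> \<and> b' \<in> rays_antirays I0.\<Gamma> \<and> ceq G ((\<lambda>x. x) \<circ> b) ((\<lambda>x. x) \<circ> b')" for b b'
      by (rule I0.end_equiv_iff)
    show "ceq G y x" if "ceq G x y" for x y using gg.ceq_sym[OF that] .
    show "ceq G x z" if "ceq G x y" "ceq G y z" for x y z using gg.ceq_trans[OF that] .
    show "\<exists>b\<in>rays_antirays I0.\<Gamma>. ceq G (fst \<circ> a) ((\<lambda>x. x) \<circ> b)" if "a \<in> rays_antirays I1.\<Gamma>" for a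
    proof -
      have "coarse G (fst \<circ> a)" using I1.RA_props(3)[OF that] .
      then obtain \<rho> where "is_ray I0.\<Gamma> \<rho>" "ceq G ((\<lambda>x. x) \<circ> \<rho>) (fst \<circ> a)" using I0.W by blast
      then show ?thesis using gg.ceq_sym unfolding rays_antirays_def by blast
    qed
    show "\<exists>a\<in>rays_antirays I1.\<Gamma>. ceq G (fst \<circ> a) ((\<lambda>x. x) \<circ> b)" if "b \<in> rays_antirays I0.\<Gamma>" for b
    proof -
      have "coarse G ((\<lambda>x. x) \<circ> b)" using I0.RA_props(3)[OF that] .
      then obtain \<rho> where "is_ray I1.\<Gamma> \<rho>" "ceq G (fst \<circ> \<rho>) ((\<lambda>x. x) \<circ> b)" using I1.W by blast
      then show ?thesis unfolding rays_antirays_def by blast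
    qed
  qed
qed

end
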